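(* Let $g$ be an $n$-variable Boolean function and $b\in\mathbb{F}_2$. Let $g_b$ be the $(n+1)$-variable Boolean function $$g_b(X_{n+1},X_n,\ldots,X_1)=(1\oplus X_{n+1})\,g(X_n,\ldots,X_1)\oplus X_{n+1}\bigl(b\oplus g(1\oplus X_n,\ldots,1\oplus X_1)\bigr).$$ Then: (1) for every $\bm{\beta}=(a,\bm{\alpha})\in\mathbb{F}_2^{n+1}$ with $a\in\mathbb{F}_2$ (the coordinate corresponding to $X_{n+1}$) and $\bm{\alpha}\in\mathbb{F}_2^n$, $$W_{g_b}(\bm{\beta})=\frac{1+(-1)^{b+\mathrm{wt}(\bm{\beta})}}{2}\,W_g(\bm{\alpha});$$ (2) $H_\infty(g_b)=H_\infty(g)$; (3) $\mathrm{Inf}(g_b)=\mathrm{Inf}(g)+\epsilon_b(g)$, where $\epsilon_b(g)=\sum_{\bm{\alpha}\in\mathbb{F}_2^n,\ \mathrm{wt}(\bm{\alpha})\not\equiv b \pmod 2}W_g^2(\bm{\alpha})$.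
   Context: Boolean functions are maps $\mathbb{F}_2^n\to\mathbb{F}_2$, with an $n$-variable function written $g(X_n,\ldots,X_1)$ and vectors ordered accordingly. Walsh transform: $W_f(\bm{\alpha})=2^{-n}\sum_{\mathbf{x}}(-1)^{f(\mathbf{x})\oplus\langle\mathbf{x},\bm{\alpha}\rangle}$, $\langle\mathbf{x},\bm{\alpha}\rangle=\bigoplus_ix_i\alpha_i$. Logarithms base 2. Min-entropy: $H_\infty(f)=\min_{\bm{\alpha}:W_f^2(\bm{\alpha})\ne0}\log(1/W_f^2(\bm{\alpha}))$. Influence: $\mathrm{Inf}(f)=\sum_{i=1}^n\Pr_{\mathbf{x}}[f(\mathbf{x})\ne f(\mathbf{x}\oplus\mathbf{e}_i)]=\sum_{\bm{\alpha}}\mathrm{wt}(\bm{\alpha})W_f^2(\bm{\alpha})$. *)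

theory Defs
  imports Complex_Main
begin

text \<open>Vectors of F_2^n are bool lists of length n; the head of the list is the
  coordinate of the highest-indexed variable X_n (so (X_n,...,X_1) is the list order).\<close>

definition vecs :: "nat \<Rightarrow> bool list set" where
  "vecs n = {xs. length xs = n}"

definition wt :: "bool list \<Rightarrow> nat" where
  "wt xs = length (filter id xs)"

definition ip :: "bool list \<Rightarrow> bool list \<Rightarrow> bool" where
  "ip x a = odd (length (filter (\<lambda>(u, v). u \<and> v) (zip x a)))"

definition sgn_b :: "bool \<Rightarrow> real" where
  "sgn_b b = (if b then -1 else 1)"

definition walsh :: "nat \<Rightarrow> (bool list \<Rightarrow> bool) \<Rightarrow> bool list \<Rightarrow> real" where
  "walsh n f a = (\<Sum>x\<in>vecs n. sgn_b (f x \<noteq> ip x a)) / 2 ^ n"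

definition min_entropy :: "nat \<Rightarrow> (bool list \<Rightarrow> bool) \<Rightarrow> real" where
  "min_entropy n f = Min {log 2 (1 / (walsh n f a)\<^sup>2) | a. a \<in> vecs n \<and> (walsh n f a)\<^sup>2 \<noteq> 0}"

definition flip :: "nat \<Rightarrow> bool list \<Rightarrow> bool list" where
  "flip i x = x[i := \<not> x ! i]"

definition influence :: "nat \<Rightarrow> (bool list \<Rightarrow> bool) \<Rightarrow> real" where
  "influence n f = (\<Sum>i<n. real (card {x \<in> vecs n. f x \<noteq> f (flip i x)}) / 2 ^ n)"

definition eps :: "nat \<Rightarrow> bool \<Rightarrow> (bool list \<Rightarrow> bool) \<Rightarrow> real" where
  "eps n b g = (\<Sum>a\<in>{a \<in> vecs n. wt a mod 2 \<noteq> of_bool b}. (walsh n g a)\<^sup>2)"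

definition ext_fun :: "(bool list \<Rightarrow> bool) \<Rightarrow> bool \<Rightarrow> bool list \<Rightarrow> bool" where
  "ext_fun g b xs = (case xs of [] \<Rightarrow> g [] |
      x # ys \<Rightarrow> ((\<not> x \<and> g ys) \<noteq> (x \<and> (b \<noteq> g (map Not ys)))))"

end

theory Submission
  imports Defs
begin

lemma sgn_b_neq: "sgn_b (p \<noteq> q) = sgn_b p * sgn_b q"
  by (simp add: sgn_b_def)
lemma sgn_b_eqnot: "sgn_b (p = (\<not> q)) = sgn_b p * sgn_b q"
  by (simp add: sgn_b_def)
lemma sgn_b_not: "sgn_b (\<not> q) = - sgn_b q"
  by (simp add: sgn_b_def)
lemma sgn_b_sq: "sgn_b p * sgn_b p = 1"
  by (simp add: sgn_b_def)

lemma vecs_0: "vecs 0 = {[]}" by (auto simp: vecs_def)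

lemma vecs_Suc: "vecs (Suc n) = Cons False ` vecs n \<union> Cons True ` vecs n"
proof -
  have "xs \<in> Cons False ` vecs n \<union> Cons True ` vecs n" if "length xs = Suc n" for xs
    using that by (cases xs) (auto simp: vecs_def image_iff)
  then show ?thesis by (auto simp: vecs_def)
qed

lemma finite_vecs: "finite (vecs n)"
  by (induction n) (auto simp: vecs_0 vecs_Suc)

lemma sum_vecs_Suc: "sum f (vecs (Suc n)) = (\<Sum>y\<in>vecs n. f (False#y) + f (True#y))"
proof -
  have "sum f (vecs (Suc n)) = sum f (Cons False ` vecs n) + sum f (Cons True ` vecs n)"
    unfolding vecs_Suc by (rule sum.union_disjoint) (auto simp: finite_vecs)
  also have "\<dots> = (\<Sum>y\<in>vecs n. f (False#y)) + (\<Sum>y\<in>vecs n. f (True#y))"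
    by (simp add: sum.reindex)
  finally show ?thesis by (simp add: sum.distrib)
qed

lemma sum_vecs_Not: "(\<Sum>y\<in>vecs n. f (map Not y)) = (\<Sum>y\<in>vecs n. f y)"
  by (rule sum.reindex_bij_witness[of _ "map Not" "map Not"]) (auto simp: vecs_def comp_def)

lemma card_vecs: "card (vecs n) = 2 ^ n"
proof (induction n)
  case 0 then show ?case by (simp add: vecs_0)
next
  case (Suc n)
  have "card (vecs (Suc n)) = card (Cons False ` vecs n) + card (Cons True ` vecs n)"
    unfolding vecs_Suc by (rule card_Un_disjoint) (auto simp: finite_vecs)
  also have "\<dots> = 2 ^ Suc n" by (simp add: card_image Suc)
  finally show ?case .
qed

lemma sum_vecs_one: "(\<Sum>y\<in>vecs n. (1::real)) = 2 ^ n"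
  by (simp add: card_vecs)

lemma ip_Cons: "ip (c#x) (a#\<alpha>) = ((c \<and> a) \<noteq> ip x \<alpha>)"
  by (cases c; cases a) (simp_all add: ip_def)
lemma sgn_b_simps[simp]: "sgn_b False = 1" "sgn_b True = -1" by (simp_all add: sgn_b_def)
lemma ip_Nil: "ip [] \<alpha> = False" by (simp add: ip_def)
lemma odd_wt_Cons: "odd (wt (a#\<alpha>)) = (a \<noteq> odd (wt \<alpha>))"
  by (simp add: wt_def)
lemma wt_Cons: "wt (a#\<alpha>) = of_bool a + wt \<alpha>"
  by (simp add: wt_def)

lemma ip_Not: "length y = length \<alpha> \<Longrightarrow> ip (map Not y) \<alpha> = (odd (wt \<alpha>) \<noteq> ip y \<alpha>)"
  by (induction y \<alpha> rule: list_induct2) (auto simp: ip_Cons ip_Nil wt_def)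

lemma orth: "length x = n \<Longrightarrow> length z = n \<Longrightarrow>
  (\<Sum>\<alpha>\<in>vecs n. sgn_b (ip x \<alpha>) * sgn_b (ip z \<alpha>) * 1) = (if x = z then 2^n else 0)"
proof (induction n arbitrary: x z)
  case 0 then show ?case by (simp add: vecs_0 ip_Nil sgn_b_def)
next
  case (Suc n)
  then obtain c x' d z' where xz: "x = c#x'" "z = d#z'" "length x' = n" "length z' = n"
    by (metis length_Suc_conv)
  have "(\<Sum>\<alpha>\<in>vecs (Suc n). sgn_b (ip x \<alpha>) * sgn_b (ip z \<alpha>) * 1)
     = (1 + sgn_b c * sgn_b d) * (\<Sum>\<alpha>\<in>vecs n. sgn_b (ip x' \<alpha>) * sgn_b (ip z' \<alpha>) * 1)"
    unfolding sum_vecs_Suc sum_distrib_left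
    by (rule sum.cong, simp, cases c; cases d) (simp_all add: xz ip_Cons sgn_b_def)
  also have "\<dots> = (if x = z then 2^Suc n else 0)"
    using Suc.IH[OF xz(3,4)] xz by (cases c; cases d) auto
  finally show ?case .
qed

lemma orth2: "length x = n \<Longrightarrow> length z = n \<Longrightarrow>
  (\<Sum>\<alpha>\<in>vecs n. sgn_b (ip x \<alpha>) * sgn_b (ip z \<alpha>) * sgn_b (odd (wt \<alpha>))) = (if z = map Not x then 2^n else 0)"
proof (induction n arbitrary: x z)
  case 0 then show ?case by (simp add: vecs_0 ip_Nil sgn_b_def wt_def)
next
  case (Suc n)
  then obtain c x' d z' where xz: "x = c#x'" "z = d#z'" "length x' = n" "length z' = n"
    by (metis length_Suc_conv)
  have "(\<Sum>\<alpha>\<in>vecs (Suc n). sgn_b (ip x \<alpha>) * sgn_b (ip z \<alpha>) * sgn_b (odd (wt \<alpha>)))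
     = (1 - sgn_b c * sgn_b d) * (\<Sum>\<alpha>\<in>vecs n. sgn_b (ip x' \<alpha>) * sgn_b (ip z' \<alpha>) * sgn_b (odd (wt \<alpha>)))"
    unfolding sum_vecs_Suc sum_distrib_left
    by (rule sum.cong, simp, cases c; cases d) (simp_all add: xz ip_Cons odd_wt_Cons sgn_b_def)
  also have "\<dots> = (if z = map Not x then 2^Suc n else 0)"
    using Suc.IH[OF xz(3,4)] xz by (cases c; cases d) auto
  finally show ?case .
qed

lemma map_Not_vecs: "x \<in> vecs n \<Longrightarrow> map Not x \<in> vecs n"
  by (simp add: vecs_def)

lemma walsh_alt: "walsh n g \<alpha> = (\<Sum>x\<in>vecs n. sgn_b (g x) * sgn_b (ip x \<alpha>)) / 2^n"
  unfolding walsh_def sgn_b_neq ..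

lemma corr: "(\<Sum>\<alpha>\<in>vecs n. (walsh n g \<alpha>)^2 * w \<alpha>) =
  (\<Sum>x\<in>vecs n. \<Sum>z\<in>vecs n. sgn_b (g x) * sgn_b (g z) *
      (\<Sum>\<alpha>\<in>vecs n. sgn_b (ip x \<alpha>) * sgn_b (ip z \<alpha>) * w \<alpha>)) / 2^n / 2^n"
proof -
  have 1: "(walsh n g \<alpha>)^2 * w \<alpha> = (\<Sum>x\<in>vecs n. \<Sum>z\<in>vecs n. sgn_b (g x) * sgn_b (g z) *
      (sgn_b (ip x \<alpha>) * sgn_b (ip z \<alpha>) * w \<alpha>)) / 2^n / 2^n" for \<alpha>
  proof -
    have "(walsh n g \<alpha>)^2 * w \<alpha> = ((\<Sum>x\<in>vecs n. sgn_b (g x) * sgn_b (ip x \<alpha>)) *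
       (\<Sum>z\<in>vecs n. sgn_b (g z) * sgn_b (ip z \<alpha>)) * w \<alpha>) / 2^n / 2^n"
      by (simp add: walsh_alt power2_eq_square)
    also have "\<dots> = (\<Sum>x\<in>vecs n. \<Sum>z\<in>vecs n. sgn_b (g x) * sgn_b (g z) *
      (sgn_b (ip x \<alpha>) * sgn_b (ip z \<alpha>) * w \<alpha>)) / 2^n / 2^n"
      unfolding sum_product by (simp add: sum_distrib_left sum_distrib_right mult_ac)
    finally show ?thesis .
  qed
  have "(\<Sum>\<alpha>\<in>vecs n. (walsh n g \<alpha>)^2 * w \<alpha>) = (\<Sum>\<alpha>\<in>vecs n. \<Sum>x\<in>vecs n. \<Sum>z\<in>vecs n. sgn_b (g x) * sgn_b (g z) *
      (sgn_b (ip x \<alpha>) * sgn_b (ip z \<alpha>) * w \<alpha>)) / 2^n / 2^n"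
    by (simp add: 1 sum_divide_distrib)
  also have "\<dots> = (\<Sum>x\<in>vecs n. \<Sum>z\<in>vecs n. \<Sum>\<alpha>\<in>vecs n. sgn_b (g x) * sgn_b (g z) *
      (sgn_b (ip x \<alpha>) * sgn_b (ip z \<alpha>) * w \<alpha>)) / 2^n / 2^n"
    by (subst sum.swap, subst (2) sum.swap, rule refl)
  finally show ?thesis by (simp add: sum_distrib_left)
qed

lemma parseval: "(\<Sum>\<alpha>\<in>vecs n. (walsh n g \<alpha>)^2) = 1"
proof -
  have "(\<Sum>\<alpha>\<in>vecs n. (walsh n g \<alpha>)^2) = (\<Sum>\<alpha>\<in>vecs n. (walsh n g \<alpha>)^2 * 1)" by simp
  also have "\<dots> = (\<Sum>x\<in>vecs n. \<Sum>z\<in>vecs n. sgn_b (g x) * sgn_b (g z) *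
      (if x = z then 2^n else 0)) / 2^n / 2^n"
  proof -
    have o: "x \<in> vecs n \<Longrightarrow> z \<in> vecs n \<Longrightarrow> (\<Sum>\<alpha>\<in>vecs n. sgn_b (ip x \<alpha>) * sgn_b (ip z \<alpha>) * 1) = (if x=z then 2^n else 0)" for x z
      by (rule orth) (simp_all add: vecs_def)
    show ?thesis unfolding corr by (intro arg_cong2[where f="(/)"] refl sum.cong) (simp only: o)
  qed
  also have "\<dots> = (\<Sum>x\<in>vecs n. 2^n) / 2^n / 2^n"
    by (simp add: if_distrib finite_vecs sgn_b_sq cong: if_cong)
  also have "\<dots> = 1" by (simp add: card_vecs)
  finally show ?thesis .
qed

lemma autocorr: "(\<Sum>\<alpha>\<in>vecs n. (walsh n g \<alpha>)^2 * sgn_b (odd (wt \<alpha>)))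
   = (\<Sum>x\<in>vecs n. sgn_b (g x) * sgn_b (g (map Not x))) / 2^n"
proof -
  have "(\<Sum>\<alpha>\<in>vecs n. (walsh n g \<alpha>)^2 * sgn_b (odd (wt \<alpha>))) = (\<Sum>x\<in>vecs n. \<Sum>z\<in>vecs n. sgn_b (g x) * sgn_b (g z) *
      (if z = map Not x then 2^n else 0)) / 2^n / 2^n"
  proof -
    have o: "x \<in> vecs n \<Longrightarrow> z \<in> vecs n \<Longrightarrow> (\<Sum>\<alpha>\<in>vecs n. sgn_b (ip x \<alpha>) * sgn_b (ip z \<alpha>) * sgn_b (odd (wt \<alpha>))) = (if z = map Not x then 2^n else 0)" for x z
      by (rule orth2) (simp_all add: vecs_def)
    show ?thesis unfolding corr by (intro arg_cong2[where f="(/)"] refl sum.cong) (simp only: o)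
  qed
  also have "\<dots> = (\<Sum>x\<in>vecs n. sgn_b (g x) * sgn_b (g (map Not x)) * 2^n) / 2^n / 2^n"
    by (intro arg_cong2[where f="(/)"] refl sum.cong) (auto simp: if_distrib finite_vecs map_Not_vecs sum.delta cong: if_cong)
  also have "\<dots> = (\<Sum>x\<in>vecs n. sgn_b (g x) * sgn_b (g (map Not x))) / 2^n"
    by (simp add: sum_distrib_right[symmetric])
  finally show ?thesis .
qed

lemma eps_alt: "eps n b g = (1 - sgn_b b * ((\<Sum>x\<in>vecs n. sgn_b (g x) * sgn_b (g (map Not x))) / 2^n)) / 2"
proof -
  have "eps n b g = (\<Sum>\<alpha>\<in>vecs n. if wt \<alpha> mod 2 \<noteq> of_bool b then (walsh n g \<alpha>)\<^sup>2 else 0)"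
    unfolding eps_def by (rule sum.inter_filter[OF finite_vecs])
  also have "\<dots> = (\<Sum>\<alpha>\<in>vecs n. ((walsh n g \<alpha>)\<^sup>2 - sgn_b b * ((walsh n g \<alpha>)\<^sup>2 * sgn_b (odd (wt \<alpha>)))) / 2)"
    by (rule sum.cong, simp, cases b; cases "odd (wt x)") (auto simp: sgn_b_def)
  also have "\<dots> = (1 - sgn_b b * ((\<Sum>x\<in>vecs n. sgn_b (g x) * sgn_b (g (map Not x))) / 2^n)) / 2"
    by (simp add: sum_divide_distrib[symmetric] sum_subtractf sum_distrib_left[symmetric] parseval autocorr)
  finally show ?thesis .
qed

lemma ext_F: "ext_fun g b (False # y) = g y" by (simp add: ext_fun_def)
lemma ext_T: "ext_fun g b (True # y) = (b \<noteq> g (map Not y))" by (simp add: ext_fun_def)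

lemma walsh_ext: assumes "\<alpha> \<in> vecs n"
  shows "walsh (Suc n) (ext_fun g b) (a # \<alpha>) = (1 + sgn_b b * sgn_b a * sgn_b (odd (wt \<alpha>))) / 2 * walsh n g \<alpha>"
proof -
  let ?S = "\<Sum>y\<in>vecs n. sgn_b (g y) * sgn_b (ip y \<alpha>)"
  have "(\<Sum>y\<in>vecs n. sgn_b (b \<noteq> g (map Not y)) * sgn_b (a \<noteq> ip y \<alpha>))
      = (\<Sum>y\<in>vecs n. sgn_b (b \<noteq> g (map Not (map Not y))) * sgn_b (a \<noteq> ip (map Not y) \<alpha>))"
    by (rule sum_vecs_Not[symmetric])
  also have "\<dots> = (\<Sum>y\<in>vecs n. sgn_b b * sgn_b a * sgn_b (odd (wt \<alpha>)) * (sgn_b (g y) * sgn_b (ip y \<alpha>)))"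
  proof (rule sum.cong)
    fix y assume "y \<in> vecs n"
    then have "ip (map Not y) \<alpha> = (odd (wt \<alpha>) \<noteq> ip y \<alpha>)" using assms by (simp add: ip_Not vecs_def)
    then show "sgn_b (b \<noteq> g (map Not (map Not y))) * sgn_b (a \<noteq> ip (map Not y) \<alpha>) =
      sgn_b b * sgn_b a * sgn_b (odd (wt \<alpha>)) * (sgn_b (g y) * sgn_b (ip y \<alpha>))"
      by (simp add: comp_def sgn_b_def)
  qed simp
  also have "\<dots> = sgn_b b * sgn_b a * sgn_b (odd (wt \<alpha>)) * ?S" by (simp add: sum_distrib_left)
  finally have 2: "(\<Sum>y\<in>vecs n. sgn_b (b \<noteq> g (map Not y)) * sgn_b (a \<noteq> ip y \<alpha>)) = sgn_b b * sgn_b a * sgn_b (odd (wt \<alpha>)) * ?S" .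
  have "walsh (Suc n) (ext_fun g b) (a # \<alpha>) = (?S + (\<Sum>y\<in>vecs n. sgn_b (b \<noteq> g (map Not y)) * sgn_b (a \<noteq> ip y \<alpha>))) / 2^Suc n"
    unfolding walsh_alt sum_vecs_Suc by (simp add: ext_F ext_T ip_Cons sum.distrib)
  also have "\<dots> = (1 + sgn_b b * sgn_b a * sgn_b (odd (wt \<alpha>))) / 2 * walsh n g \<alpha>"
    unfolding 2 walsh_alt by (simp add: field_simps)
  finally show ?thesis .
qed

lemma walsh_ext2: assumes "\<alpha> \<in> vecs n"
  shows "walsh (Suc n) (ext_fun g b) (a # \<alpha>) = (if a = (b \<noteq> odd (wt \<alpha>)) then walsh n g \<alpha> else 0)"
  unfolding walsh_ext[OF assms] by (cases a; cases b; cases "odd (wt \<alpha>)") (simp_all add: sgn_b_def)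

lemma minus_one_pow: "(-1::real) ^ k = sgn_b (odd k)"
  by (simp add: sgn_b_def minus_one_power_iff)

lemma card_sum: "finite A \<Longrightarrow> real (card {x\<in>A. P x}) = (\<Sum>x\<in>A. if P x then 1 else 0)"
  by (simp add: sum.inter_filter[symmetric])

lemma vecs_Suc_cases: assumes "\<beta> \<in> vecs (Suc n)"
  obtains a \<alpha> where "\<beta> = a # \<alpha>" "\<alpha> \<in> vecs n"
  using assms by (cases \<beta>) (auto simp: vecs_def)

lemma min_entropy_ext: "min_entropy (Suc n) (ext_fun g b) = min_entropy n g"
proof -
  have "{log 2 (1 / (walsh (Suc n) (ext_fun g b) a)\<^sup>2) | a. a \<in> vecs (Suc n) \<and> (walsh (Suc n) (ext_fun g b) a)\<^sup>2 \<noteq> 0}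
      = {log 2 (1 / (walsh n g a)\<^sup>2) | a. a \<in> vecs n \<and> (walsh n g a)\<^sup>2 \<noteq> 0}" (is "?L = ?R")
  proof
    show "?L \<subseteq> ?R"
    proof
      fix v assume "v \<in> ?L"
      then obtain \<beta> where \<beta>: "v = log 2 (1 / (walsh (Suc n) (ext_fun g b) \<beta>)\<^sup>2)" "\<beta> \<in> vecs (Suc n)"
        "(walsh (Suc n) (ext_fun g b) \<beta>)\<^sup>2 \<noteq> 0" by blast
      obtain a \<alpha> where a: "\<beta> = a # \<alpha>" "\<alpha> \<in> vecs n" using \<beta>(2) by (rule vecs_Suc_cases)
      have "walsh (Suc n) (ext_fun g b) \<beta> = walsh n g \<alpha>"
        using \<beta>(3) unfolding a walsh_ext2[OF a(2)] by (auto split: if_splits)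
      then show "v \<in> ?R" using \<beta> a by auto
    qed
  next
    show "?R \<subseteq> ?L"
    proof
      fix v assume "v \<in> ?R"
      then obtain \<alpha> where \<alpha>: "v = log 2 (1 / (walsh n g \<alpha>)\<^sup>2)" "\<alpha> \<in> vecs n"
        "(walsh n g \<alpha>)\<^sup>2 \<noteq> 0" by blast
      let ?\<beta> = "(b \<noteq> odd (wt \<alpha>)) # \<alpha>"
      have "walsh (Suc n) (ext_fun g b) ?\<beta> = walsh n g \<alpha>" by (simp add: walsh_ext2[OF \<alpha>(2)])
      moreover have "?\<beta> \<in> vecs (Suc n)" using \<alpha>(2) by (simp add: vecs_def)
      ultimately show "v \<in> ?L" using \<alpha> by (metis (mono_tags, lifting) mem_Collect_eq)
    qed
  qed
  then show ?thesis unfolding min_entropy_def by simp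
qed

lemma inf0: "real (card {x \<in> vecs (Suc n). ext_fun g b x \<noteq> ext_fun g b (flip 0 x)}) / 2 ^ Suc n = eps n b g"
proof -
  have "real (card {x \<in> vecs (Suc n). ext_fun g b x \<noteq> ext_fun g b (flip 0 x)})
     = (\<Sum>y\<in>vecs n. 1 - sgn_b b * (sgn_b (g y) * sgn_b (g (map Not y))))"
    unfolding card_sum[OF finite_vecs] sum_vecs_Suc
    by (rule sum.cong) (auto simp: flip_def ext_F ext_T sgn_b_def)
  also have "\<dots> = 2^n - sgn_b b * (\<Sum>y\<in>vecs n. sgn_b (g y) * sgn_b (g (map Not y)))"
    by (simp add: sum_subtractf sum_distrib_left card_vecs)
  finally show ?thesis unfolding eps_alt by (simp add: field_simps)
qed

lemma flip_Suc: "flip (Suc i) (c # y) = c # flip i y" by (simp add: flip_def)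

lemma map_Not_flip: "i < length y \<Longrightarrow> map Not (flip i y) = flip i (map Not y)"
  by (simp add: flip_def map_update)

lemma infS: assumes "i < n"
  shows "real (card {x \<in> vecs (Suc n). ext_fun g b x \<noteq> ext_fun g b (flip (Suc i) x)}) / 2 ^ Suc n
       = real (card {x \<in> vecs n. g x \<noteq> g (flip i x)}) / 2 ^ n"
proof -
  let ?h = "\<lambda>y. if g y \<noteq> g (flip i y) then 1 else (0::real)"
  have "real (card {x \<in> vecs (Suc n). ext_fun g b x \<noteq> ext_fun g b (flip (Suc i) x)})
     = (\<Sum>y\<in>vecs n. ?h y + ?h (map Not y))"
    unfolding card_sum[OF finite_vecs] sum_vecs_Suc
  proof (rule sum.cong)
    fix y assume "y \<in> vecs n"
    then have "map Not (flip i y) = flip i (map Not y)" using assms by (simp add: map_Not_flip vecs_def)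
    then show "(if ext_fun g b (False # y) \<noteq> ext_fun g b (flip (Suc i) (False # y)) then 1 else 0) +
          (if ext_fun g b (True # y) \<noteq> ext_fun g b (flip (Suc i) (True # y)) then 1 else 0)
          = ?h y + ?h (map Not y)"
      by (auto simp: flip_Suc ext_F ext_T)
  qed simp
  also have "\<dots> = 2 * (\<Sum>y\<in>vecs n. ?h y)"
    using sum_vecs_Not[where f = ?h and n = n] by (simp add: sum.distrib del: sum_vecs_Not)
  finally show ?thesis by (simp add: card_sum[OF finite_vecs])
qed

theorem proposition2:
  fixes n :: nat and g :: "bool list \<Rightarrow> bool" and b :: bool
  shows "(\<forall>a \<alpha>. \<alpha> \<in> vecs n \<longrightarrow>
            walsh (Suc n) (ext_fun g b) (a # \<alpha>)
              = (1 + (-1) ^ (of_bool b + wt (a # \<alpha>))) / 2 * walsh n g \<alpha>)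
       \<and> min_entropy (Suc n) (ext_fun g b) = min_entropy n g
       \<and> influence (Suc n) (ext_fun g b) = influence n g + eps n b g"
proof (intro conjI allI impI)
  fix a \<alpha> assume h: "\<alpha> \<in> vecs n"
  have "(-1::real) ^ (of_bool b + wt (a # \<alpha>)) = sgn_b b * sgn_b a * sgn_b (odd (wt \<alpha>))"
    unfolding minus_one_pow by (cases a; cases b) (simp_all add: wt_Cons sgn_b_def)
  then show "walsh (Suc n) (ext_fun g b) (a # \<alpha>)
              = (1 + (-1) ^ (of_bool b + wt (a # \<alpha>))) / 2 * walsh n g \<alpha>"
    by (simp add: walsh_ext[OF h])
next
  show "min_entropy (Suc n) (ext_fun g b) = min_entropy n g" by (rule min_entropy_ext)
next
  show "influence (Suc n) (ext_fun g b) = influence n g + eps n b g"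
  proof -
    have "(\<Sum>i<n. real (card {x \<in> vecs (Suc n). ext_fun g b x \<noteq> ext_fun g b (flip (Suc i) x)}) / 2 ^ Suc n)
       = (\<Sum>i<n. real (card {x \<in> vecs n. g x \<noteq> g (flip i x)}) / 2 ^ n)"
      by (rule sum.cong[OF refl], rule infS, simp)
    then show ?thesis unfolding influence_def sum.lessThan_Suc_shift inf0 by simp
  qed
qed

end
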